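(* There exists an infinite family of Boolean matrices $(A_n)_{n}$, with $A_n$ of size $n\times n$, such that for each $n$, every cancellation-free linear circuit computing $A_n$ has size at least $(2-o(1))$ times the size of a smallest linear circuit (cancellations allowed) computing $A_n$. Consequently the cancellation ratio satisfies $\rho(n)\geq 2-o(1)$.
   Context: A linear circuit over $\mathbb{F}_2$ with inputs $x_1,\ldots,x_n$ is a directed acyclic graph whose in-degree-0 nodes are the inputs and whose other nodes (gates) have in-degree 2 and compute the sum over $\mathbb{F}_2$ (XOR) of their two children; $m$ nodes are designated as outputs $y_1,\ldots,y_m$. The circuit computes the Boolean $m\times n$ matrix $A$ if $\mathbf{y}=A\mathbf{x}$ for all $\mathbf{x}\in\mathbb{F}_2^n$ (output $y_i$ computes the $i$-th row). The size of a circuit is its number of gates. Each node $u$ computes a parity of a subset of inputs; its value vector $\kappa(u)\in\mathbb{F}_2^n$ has $\kappa(u)_i=1$ iff $x_i$ occurs in that parity (so $\kappa(x_i)=e^{(i)}$ and $\kappa(u)=\kappa(w)\oplus\kappa(t)$ for a gate with children $w,t$). A linear circuit is cancellation-free if whenever there is a directed path from a node $w$ to a node $u$, we have $\kappa(u)\geq\kappa(w)$ in the coordinatewise order. The cancellation ratio $\rho(n)$ is the maximum, over $n\times n$ Boolean matrices $A$, of the ratio between the size of a smallest cancellation-free linear circuit computing $A$ and the size of a smallest linear circuit computing $A$. *)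

theory Defs
  imports Complex_Main
begin

(* A linear circuit over F_2 with n inputs is given by a list gs of gates in
   topological order.  Nodes 0..n-1 are the inputs x_1..x_n; node n+k is gate k.
   Outputs: outs i is the node designated as output y_{i+1}, for i < m.
   Vectors in F_2^n are represented as nat => bool (coordinate j <-> x_{j+1}). *)

definition wf_circuit :: "nat \<Rightarrow> (nat \<times> nat) list \<Rightarrow> nat \<Rightarrow> (nat \<Rightarrow> nat) \<Rightarrow> bool" where
  "wf_circuit n gs m outs \<longleftrightarrow>
     (\<forall>k < length gs. fst (gs ! k) < n + k \<and> snd (gs ! k) < n + k \<and> fst (gs ! k) \<noteq> snd (gs ! k))
     \<and> (\<forall>i < m. outs i < n + length gs)"

definition node_values :: "nat \<Rightarrow> (nat \<times> nat) list \<Rightarrow> (nat \<Rightarrow> bool) list" where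
  "node_values n gs =
     fold (\<lambda>(a, b) vs. vs @ [(\<lambda>j. (vs ! a) j \<noteq> (vs ! b) j)]) gs (map (\<lambda>i j. j = i) [0..<n])"

definition kappa :: "nat \<Rightarrow> (nat \<times> nat) list \<Rightarrow> nat \<Rightarrow> (nat \<Rightarrow> bool)" where
  "kappa n gs v = node_values n gs ! v"

definition circuit_edges :: "nat \<Rightarrow> (nat \<times> nat) list \<Rightarrow> (nat \<times> nat) set" where
  "circuit_edges n gs = {(c, n + k) | c k. k < length gs \<and> (c = fst (gs ! k) \<or> c = snd (gs ! k))}"

definition cancellation_free :: "nat \<Rightarrow> (nat \<times> nat) list \<Rightarrow> bool" where
  "cancellation_free n gs \<longleftrightarrow>
     (\<forall>w u. (w, u) \<in> (circuit_edges n gs)\<^sup>* \<longrightarrow> kappa n gs w \<le> kappa n gs u)"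

definition computes :: "nat \<Rightarrow> nat \<Rightarrow> (nat \<times> nat) list \<Rightarrow> (nat \<Rightarrow> nat) \<Rightarrow> (nat \<Rightarrow> nat \<Rightarrow> bool) \<Rightarrow> bool" where
  "computes n m gs outs A \<longleftrightarrow> wf_circuit n gs m outs \<and>
     (\<forall>i < m. \<forall>j. kappa n gs (outs i) j = (j < n \<and> A i j))"

definition min_size :: "nat \<Rightarrow> nat \<Rightarrow> (nat \<Rightarrow> nat \<Rightarrow> bool) \<Rightarrow> nat" where
  "min_size n m A = (LEAST s. \<exists>gs outs. computes n m gs outs A \<and> length gs = s)"

definition cf_min_size :: "nat \<Rightarrow> nat \<Rightarrow> (nat \<Rightarrow> nat \<Rightarrow> bool) \<Rightarrow> nat" where
  "cf_min_size n m A = (LEAST s. \<exists>gs outs. computes n m gs outs A \<and> cancellation_free n gs \<and> length gs = s)"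

definition cancellation_ratio :: "nat \<Rightarrow> real" where
  "cancellation_ratio n = Max {real (cf_min_size n n A) / real (min_size n n A) | A.
       \<forall>i j. A i j \<longrightarrow> i < n \<and> j < n}"

end

theory Submission
  imports Defs
begin


lemma nv_snoc: "node_values n (gs @ [(a,b)]) =
   node_values n gs @ [(\<lambda>j. (node_values n gs ! a) j \<noteq> (node_values n gs ! b) j)]"
  unfolding node_values_def by simp

lemma nv_len: "length (node_values n gs) = n + length gs"
proof (induct gs rule: rev_induct)
  case Nil then show ?case by (simp add: node_values_def)
next
  case (snoc x xs) then show ?case by (cases x) (simp add: nv_snoc)
qed

lemma nv_app: "\<exists>ys. node_values n (gs @ hs) = node_values n gs @ ys"
proof (induct hs rule: rev_induct)
  case Nil then show ?case by simp
next
  case (snoc x xs)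
  then obtain ys where "node_values n (gs @ xs) = node_values n gs @ ys" by blast
  then show ?case by (cases x) (simp add: nv_snoc[of n "gs @ xs", simplified])
qed

lemma kappa_prefix: "v < n + length gs \<Longrightarrow> kappa n (gs @ hs) v = kappa n gs v"
proof -
  assume v: "v < n + length gs"
  obtain ys where "node_values n (gs @ hs) = node_values n gs @ ys" using nv_app by blast
  then show ?thesis using v by (simp add: kappa_def nth_append nv_len)
qed

lemma kappa_input: "i < n \<Longrightarrow> kappa n gs i = (\<lambda>j. j = i)"
proof -
  assume i: "i < n"
  have "kappa n ([] @ gs) i = kappa n [] i" using i by (intro kappa_prefix) simp
  also have "\<dots> = (\<lambda>j. j = i)" using i by (simp add: kappa_def node_values_def)
  finally show ?thesis by simp
qed

lemma kappa_gate0: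
  assumes k: "k < length gs" and g: "gs ! k = (a,b)" and a: "a < n + k" and b: "b < n + k"
  shows "kappa n gs (n+k) = (\<lambda>j. kappa n gs a j \<noteq> kappa n gs b j)"
proof -
  define G where "G = take k gs"
  have lG: "length G = k" using k by (simp add: G_def)
  have gs: "gs = (G @ [(a,b)]) @ drop (Suc k) gs"
    using id_take_nth_drop[OF k] g by (simp add: G_def)
  have "kappa n gs (n+k) = kappa n (G @ [(a,b)]) (n+k)"
    by (subst gs, rule kappa_prefix) (simp add: lG)
  also have "\<dots> = (\<lambda>j. kappa n G a j \<noteq> kappa n G b j)"
    by (simp add: kappa_def nv_snoc nth_append nv_len lG)
  also have "kappa n G a = kappa n gs a"
    using kappa_prefix[of a n G "[(a,b)] @ drop (Suc k) gs"] gs a lG by simp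
  also have "kappa n G b = kappa n gs b"
    using kappa_prefix[of b n G "[(a,b)] @ drop (Suc k) gs"] gs b lG by simp
  finally show ?thesis .
qed

lemma kappa_gate:
  assumes wf: "wf_circuit n gs m outs" and k: "k < length gs"
  shows "kappa n gs (n+k) = (\<lambda>j. kappa n gs (fst (gs!k)) j \<noteq> kappa n gs (snd (gs!k)) j)"
  using wf k kappa_gate0[OF k, of "fst (gs!k)" "snd (gs!k)"] by (simp add: wf_circuit_def)



lemma edge_D: "(c,v) \<in> circuit_edges n gs \<Longrightarrow>
  \<exists>k. v = n + k \<and> k < length gs \<and> (c = fst (gs!k) \<or> c = snd (gs!k))"
  by (auto simp: circuit_edges_def)

lemma edge_lt: "wf_circuit n gs m outs \<Longrightarrow> (c,v) \<in> circuit_edges n gs \<Longrightarrow> c < v \<and> v < n + length gs"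
  by (auto simp: circuit_edges_def wf_circuit_def)

lemma rt_le: "wf_circuit n gs m outs \<Longrightarrow> (x,y) \<in> (circuit_edges n gs)\<^sup>* \<Longrightarrow> x \<le> y"
proof -
  assume wf: "wf_circuit n gs m outs"
  assume "(x,y) \<in> (circuit_edges n gs)\<^sup>*"
  then show "x \<le> y"
  proof (induct rule: rtrancl_induct)
    case base then show ?case by simp
  next
    case (step y z) then show ?case using edge_lt[OF wf, of y z] by simp
  qed
qed

lemma supp_lt: "wf_circuit n gs m outs \<Longrightarrow> v < n + length gs \<Longrightarrow> kappa n gs v j \<Longrightarrow> j < n"
proof (induct v rule: less_induct)
  case (less v)
  show ?case
  proof (cases "v < n")
    case True then show ?thesis using less by (simp add: kappa_input)
  next
    case False
    then obtain k where v: "v = n + k" by (metis le_add_diff_inverse not_less)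
    have k: "k < length gs" using less v by simp
    have ch: "fst (gs!k) < v" "snd (gs!k) < v" using less(2) k v by (auto simp: wf_circuit_def)
    have "kappa n gs (fst (gs!k)) j \<or> kappa n gs (snd (gs!k)) j"
      using less(4) kappa_gate[OF less(2) k] v by auto
    then show ?thesis using less(1)[OF ch(1) less(2)] less(1)[OF ch(2) less(2)] ch less(3) by auto
  qed
qed

lemma cf_le: "cancellation_free n gs \<Longrightarrow> (w,u) \<in> (circuit_edges n gs)\<^sup>* \<Longrightarrow> kappa n gs w j \<Longrightarrow> kappa n gs u j"
  unfolding cancellation_free_def le_fun_def le_bool_def by blast

lemma child_edges: "k < length gs \<Longrightarrow> (fst (gs!k), n+k) \<in> circuit_edges n gs \<and> (snd (gs!k), n+k) \<in> circuit_edges n gs"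
  by (auto simp: circuit_edges_def)

lemma cf_nonzero: "wf_circuit n gs m outs \<Longrightarrow> cancellation_free n gs \<Longrightarrow> v < n + length gs \<Longrightarrow> \<exists>j. kappa n gs v j"
proof (induct v rule: less_induct)
  case (less v)
  show ?case
  proof (cases "v < n")
    case True then show ?thesis by (simp add: kappa_input)
  next
    case False
    then obtain k where v: "v = n + k" by (metis le_add_diff_inverse not_less)
    have k: "k < length gs" using less v by simp
    have ch: "fst (gs!k) < v" using less(2) k v by (auto simp: wf_circuit_def)
    obtain j where "kappa n gs (fst (gs!k)) j" using less(1)[OF ch less(2,3)] ch less(4) by auto
    moreover have "(fst (gs!k), v) \<in> (circuit_edges n gs)\<^sup>*" using child_edges[OF k] v by auto
    ultimately show ?thesis using cf_le[OF less(3)] by blast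
  qed
qed

lemma cf_disj: "wf_circuit n gs m outs \<Longrightarrow> cancellation_free n gs \<Longrightarrow> k < length gs \<Longrightarrow>
   \<not> (kappa n gs (fst (gs!k)) j \<and> kappa n gs (snd (gs!k)) j)"
proof
  assume wf: "wf_circuit n gs m outs" and cf: "cancellation_free n gs" and k: "k < length gs"
    and h: "kappa n gs (fst (gs!k)) j \<and> kappa n gs (snd (gs!k)) j"
  have "(fst (gs!k), n+k) \<in> (circuit_edges n gs)\<^sup>*" using child_edges[OF k] by auto
  then have "kappa n gs (n+k) j" using cf_le[OF cf] h by blast
  then show False using kappa_gate[OF wf k] h by simp
qed

definition below :: "nat \<Rightarrow> (nat \<times> nat) list \<Rightarrow> nat \<Rightarrow> nat set" where
  "below n gs u = {v. n \<le> v \<and> v < n + length gs \<and> (v,u) \<in> (circuit_edges n gs)\<^sup>*}"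

lemma below_finite: "finite (below n gs u)"
  by (rule finite_subset[of _ "{..<n + length gs}"]) (auto simp: below_def)

lemma supp_finite: "wf_circuit n gs m outs \<Longrightarrow> v < n + length gs \<Longrightarrow> finite {j. kappa n gs v j}"
  by (rule finite_subset[of _ "{..<n}"]) (auto dest: supp_lt)

lemma below_card: "wf_circuit n gs m outs \<Longrightarrow> cancellation_free n gs \<Longrightarrow> u < n + length gs \<Longrightarrow>
   card {j. kappa n gs u j} \<le> card (below n gs u) + 1"
proof (induct u rule: less_induct)
  case (less u)
  note wf = less(2) and cf = less(3)
  show ?case
  proof (cases "u < n")
    case True then show ?thesis by (simp add: kappa_input)
  next
    case False
    then obtain k where u: "u = n + k" by (metis le_add_diff_inverse not_less)
    have k: "k < length gs" using less u by simp
    define a where "a = fst (gs!k)"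
    define b where "b = snd (gs!k)"
    have ab: "a < u" "b < u" using wf k u by (auto simp: wf_circuit_def a_def b_def)
    have IHa: "card {j. kappa n gs a j} \<le> card (below n gs a) + 1" using less(1)[OF ab(1) wf cf] ab less(4) by simp
    have IHb: "card {j. kappa n gs b j} \<le> card (below n gs b) + 1" using less(1)[OF ab(2) wf cf] ab less(4) by simp
    have dis: "\<And>j. \<not> (kappa n gs a j \<and> kappa n gs b j)" using cf_disj[OF wf cf k] by (simp add: a_def b_def)
    have su: "{j. kappa n gs u j} = {j. kappa n gs a j} \<union> {j. kappa n gs b j}"
      using kappa_gate[OF wf k] u dis by (auto simp: a_def b_def)
    have cs: "card {j. kappa n gs u j} = card {j. kappa n gs a j} + card {j. kappa n gs b j}"
      unfolding su using dis supp_finite[OF wf, of a] supp_finite[OF wf, of b] ab less(4)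
      by (intro card_Un_disjoint) auto
    have ea: "(a,u) \<in> circuit_edges n gs" "(b,u) \<in> circuit_edges n gs"
      using child_edges[OF k] u by (auto simp: a_def b_def)
    have sub: "insert u (below n gs a \<union> below n gs b) \<subseteq> below n gs u"
      using ea less(4) False u by (auto simp: below_def intro: rtrancl_into_rtrancl)
    have unot: "u \<notin> below n gs a \<union> below n gs b"
      using rt_le[OF wf] ab by (force simp: below_def)
    have bdis: "below n gs a \<inter> below n gs b = {}"
    proof (rule ccontr)
      assume "below n gs a \<inter> below n gs b \<noteq> {}"
      then obtain v where v: "v \<in> below n gs a" "v \<in> below n gs b" by blast
      then have vl: "v < n + length gs" by (simp add: below_def)
      obtain j where j: "kappa n gs v j" using cf_nonzero[OF wf cf vl] by blast
      have "kappa n gs a j" "kappa n gs b j" using v j cf_le[OF cf] by (auto simp: below_def)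
      then show False using dis by blast
    qed
    have "card (insert u (below n gs a \<union> below n gs b)) = card (below n gs a) + card (below n gs b) + 1"
      using unot bdis below_finite by (simp add: card_Un_disjoint)
    moreover have "card (insert u (below n gs a \<union> below n gs b)) \<le> card (below n gs u)"
      using sub below_finite by (rule card_mono[rotated])
    ultimately show ?thesis using cs IHa IHb by linarith
  qed
qed



definition Amat :: "nat \<Rightarrow> nat \<Rightarrow> nat \<Rightarrow> bool" where
  "Amat n i j = (i < n \<and> j < n \<and> (if i < n - 1 then j \<le> Suc i else 1 \<le> j))"

lemma lower:
  assumes n: "2 \<le> n" and c: "computes n n gs outs (Amat n)" and cf: "cancellation_free n gs"
  shows "2 * n - 3 \<le> length gs"
proof -
  have wf: "wf_circuit n gs n outs" and val: "\<And>i j. i < n \<Longrightarrow> kappa n gs (outs i) j = (j < n \<and> Amat n i j)"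
    using c by (auto simp: computes_def)
  define r where "r = outs (n-1)"
  have rl: "r < n + length gs" using wf n by (simp add: wf_circuit_def r_def)
  have nn: "n - 1 < n" using n by simp
  have kr: "\<And>j. kappa n gs r j = (j < n \<and> Amat n (n-1) j)" using val[OF nn] by (simp only: r_def)
  have sr: "{j. kappa n gs r j} = {1..<n}" using nn by (auto simp: kr Amat_def)
  have Br: "n - 2 \<le> card (below n gs r)" using below_card[OF wf cf rl] sr by simp
  define C0 where "C0 = {v. n \<le> v \<and> v < n + length gs \<and> kappa n gs v 0}"
  have d: "below n gs r \<inter> C0 = {}"
  proof -
    have "\<not> kappa n gs r 0" by (simp add: kr Amat_def)
    then show ?thesis using cf_le[OF cf] by (auto simp: below_def C0_def)
  qed
  have oc: "outs ` {..<n-1} \<subseteq> C0"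
  proof
    fix v assume "v \<in> outs ` {..<n-1}"
    then obtain i where i: "i < n - 1" "v = outs i" by auto
    have k0: "kappa n gs v 0" "kappa n gs v 1" using val[of i] i n by (auto simp: Amat_def)
    have "n \<le> v"
    proof (rule ccontr)
      assume "\<not> n \<le> v"
      then show False using k0 kappa_input[of v n gs] by simp
    qed
    moreover have "v < n + length gs" using wf i by (simp add: wf_circuit_def)
    ultimately show "v \<in> C0" using k0 by (simp add: C0_def)
  qed
  have inj: "inj_on outs {..<n-1}"
  proof (rule inj_onI)
    fix i i' assume i: "i \<in> {..<n-1}" and i': "i' \<in> {..<n-1}" and e: "outs i = outs i'"
    show "i = i'"
    proof (rule ccontr)
      assume ne: "i \<noteq> i'"
      have A: "\<And>x y. x < n - 1 \<Longrightarrow> y < n - 1 \<Longrightarrow> x < y \<Longrightarrow> outs x \<noteq> outs y"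
      proof
        fix x y assume xy: "x < n - 1" "y < n - 1" "x < y" "outs x = outs y"
        have "kappa n gs (outs y) (Suc y)" using val[of y] xy by (simp add: Amat_def)
        moreover have "\<not> kappa n gs (outs x) (Suc y)" using val[of x] xy by (simp add: Amat_def)
        ultimately show False using xy by simp
      qed
      show False using A[of i i'] A[of i' i] i i' e ne by (cases "i < i'") auto
    qed
  qed
  have cC: "n - 1 \<le> card C0"
  proof -
    have "card (outs ` {..<n-1}) = n - 1" using inj by (simp add: card_image)
    moreover have "finite C0" by (rule finite_subset[of _ "{..<n+length gs}"]) (auto simp: C0_def)
    ultimately show ?thesis using oc card_mono[of C0 "outs ` {..<n-1}"] by simp
  qed
  have "below n gs r \<union> C0 \<subseteq> {n..<n + length gs}" by (auto simp: below_def C0_def)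
  then have "card (below n gs r \<union> C0) \<le> length gs" using card_mono[of "{n..<n + length gs}" "below n gs r \<union> C0"] by simp
  moreover have "card (below n gs r \<union> C0) = card (below n gs r) + card C0"
    using d below_finite by (intro card_Un_disjoint) (auto intro: finite_subset[of _ "{..<n+length gs}"] simp: C0_def)
  ultimately show ?thesis using Br cC n by linarith
qed



definition pf :: "nat \<Rightarrow> nat \<Rightarrow> nat \<times> nat" where
  "pf n k = (if k = 0 then (0,1) else (n + k - 1, Suc k))"
definition qf :: "nat \<Rightarrow> nat \<Rightarrow> nat \<times> nat" where
  "qf n t = (if t = 0 then (1,2) else (n + n - 1 + t - 1, t + 2))"
definition gs1 :: "nat \<Rightarrow> (nat \<times> nat) list" where
  "gs1 n = map (pf n) [0..<n-1] @ [(n + n - 2, 0)]"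
definition outs1 :: "nat \<Rightarrow> nat \<Rightarrow> nat" where
  "outs1 n i = (if i < n - 1 then n + i else n + n - 1)"
definition gs2 :: "nat \<Rightarrow> (nat \<times> nat) list" where
  "gs2 n = map (pf n) [0..<n-1] @ map (qf n) [0..<n-2]"
definition outs2 :: "nat \<Rightarrow> nat \<Rightarrow> nat" where
  "outs2 n i = (if i < n - 1 then n + i else n + n - 1 + (n - 3))"

lemma pvals:
  assumes wf: "wf_circuit n gs m outs" and l: "n - 1 \<le> length gs" and p: "\<forall>k<n-1. gs!k = pf n k"
  shows "k < n - 1 \<Longrightarrow> kappa n gs (n+k) = (\<lambda>j. j \<le> Suc k)"
proof (induct k)
  case 0
  have k: "0 < length gs" using 0 l by linarith
  have g: "gs ! 0 = (0,1)" using p 0 by (simp add: pf_def)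
  have n: "0 < n" "1 < n" using 0 by auto
  have "kappa n gs (n+0) = (\<lambda>j. kappa n gs 0 j \<noteq> kappa n gs 1 j)" using kappa_gate[OF wf k] g by simp
  also have "\<dots> = (\<lambda>j. j \<le> Suc 0)" unfolding kappa_input[OF n(1)] kappa_input[OF n(2)] by (rule ext) auto
  finally show ?case .
next
  case (Suc k)
  have k: "Suc k < length gs" using Suc l by simp
  have g: "gs ! Suc k = (n + k, Suc (Suc k))" using p Suc by (simp add: pf_def)
  have n: "Suc (Suc k) < n" using Suc by auto
  have IH: "kappa n gs (n+k) = (\<lambda>j. j \<le> Suc k)" using Suc by simp
  have "kappa n gs (n + Suc k) = (\<lambda>j. kappa n gs (n+k) j \<noteq> kappa n gs (Suc (Suc k)) j)" using kappa_gate[OF wf k] g by simp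
  also have "\<dots> = (\<lambda>j. j \<le> Suc (Suc k))" unfolding IH kappa_input[OF n] by (rule ext) auto
  finally show ?case .
qed

lemma qvals:
  assumes wf: "wf_circuit n gs m outs" and n: "3 \<le> n" and l: "n - 1 + (n - 2) \<le> length gs"
    and p: "\<forall>t<n-2. gs!(n - 1 + t) = qf n t"
  shows "t < n - 2 \<Longrightarrow> kappa n gs (n + (n - 1 + t)) = (\<lambda>j. 1 \<le> j \<and> j \<le> t + 2)"
proof (induct t)
  case 0
  have k: "n - 1 + 0 < length gs" using 0 l by simp
  have g: "gs ! (n - 1 + 0) = (1,2)" using spec[OF p, of 0] 0 by (simp add: qf_def)
  have n': "1 < n" "2 < n" using n by auto
  have "kappa n gs (n + (n - 1 + 0)) = (\<lambda>j. kappa n gs 1 j \<noteq> kappa n gs 2 j)" using kappa_gate[OF wf k] g by simp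
  also have "\<dots> = (\<lambda>j. 1 \<le> j \<and> j \<le> 0 + 2)" unfolding kappa_input[OF n'(1)] kappa_input[OF n'(2)] by (rule ext) auto
  finally show ?case .
next
  case (Suc t)
  have k: "n - 1 + Suc t < length gs" using Suc l by simp
  have e: "n + n - 1 + Suc t - 1 = n + (n - 1 + t)" using n by simp
  have g: "gs ! (n - 1 + Suc t) = (n + (n - 1 + t), Suc t + 2)" using spec[OF p, of "Suc t"] Suc(2) e by (simp add: qf_def)
  have n': "Suc t + 2 < n" using Suc by auto
  have IH: "kappa n gs (n + (n - 1 + t)) = (\<lambda>j. 1 \<le> j \<and> j \<le> t + 2)" using Suc by simp
  have "kappa n gs (n + (n - 1 + Suc t)) = (\<lambda>j. kappa n gs (n + (n - 1 + t)) j \<noteq> kappa n gs (Suc t + 2) j)" using kappa_gate[OF wf k] g by simp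
  also have "\<dots> = (\<lambda>j. 1 \<le> j \<and> j \<le> Suc t + 2)" unfolding IH kappa_input[OF n'] by (rule ext) auto
  finally show ?case .
qed

lemma len1: "2 \<le> n \<Longrightarrow> length (gs1 n) = n" by (simp add: gs1_def)
lemma nth1a: "k < n - 1 \<Longrightarrow> gs1 n ! k = pf n k" by (simp add: gs1_def nth_append)
lemma nth1b: "2 \<le> n \<Longrightarrow> gs1 n ! (n - 1) = (n + n - 2, 0)" by (simp add: gs1_def nth_append)
lemma len2: "3 \<le> n \<Longrightarrow> length (gs2 n) = n - 1 + (n - 2)" by (simp add: gs2_def)
lemma nth2a: "k < n - 1 \<Longrightarrow> gs2 n ! k = pf n k" by (simp add: gs2_def nth_append)
lemma nth2b: assumes tt: "t < n - 2" shows "gs2 n ! (n - 1 + t) = qf n t" proof -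
  have "gs2 n ! (n - 1 + t) = map (qf n) [0..<n-2] ! t"
    unfolding gs2_def using nth_append_length_plus[of "map (pf n) [0..<n-1]" "map (qf n) [0..<n-2]" t] by simp
  then show ?thesis using tt by simp
qed

lemma wf1: assumes n: "2 \<le> n" shows "wf_circuit n (gs1 n) n (outs1 n)"
  unfolding wf_circuit_def
proof (rule conjI; intro allI impI)
  fix k assume k: "k < length (gs1 n)"
  show "fst (gs1 n ! k) < n + k \<and> snd (gs1 n ! k) < n + k \<and> fst (gs1 n ! k) \<noteq> snd (gs1 n ! k)"
  proof (cases "k < n - 1")
    case True then show ?thesis by (auto simp: nth1a pf_def)
  next
    case False then have "k = n - 1" using k len1[OF n] by simp
    then have g: "gs1 n ! k = (n + n - 2, 0)" using nth1b[OF n] by simp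
    show ?thesis unfolding g using n \<open>k = n - 1\<close> by simp
  qed
next
  fix i assume "i < n" then show "outs1 n i < n + length (gs1 n)" using n by (simp add: outs1_def len1)
qed

lemma wf2: assumes n: "3 \<le> n" shows "wf_circuit n (gs2 n) n (outs2 n)"
  unfolding wf_circuit_def
proof (rule conjI; intro allI impI)
  fix k assume k: "k < length (gs2 n)"
  show "fst (gs2 n ! k) < n + k \<and> snd (gs2 n ! k) < n + k \<and> fst (gs2 n ! k) \<noteq> snd (gs2 n ! k)"
  proof (cases "k < n - 1")
    case True then show ?thesis by (auto simp: nth2a pf_def)
  next
    case False then obtain t where t: "k = n - 1 + t" "t < n - 2" using k len2[OF n]
      by (metis add_less_cancel_left le_add_diff_inverse not_less)
    then have g: "gs2 n ! k = qf n t" using nth2b by simp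
    show ?thesis unfolding g using n t by (auto simp: qf_def)
  qed
next
  fix i assume "i < n" then show "outs2 n i < n + length (gs2 n)" using n by (auto simp: outs2_def len2)
qed



lemma comp1: assumes n: "2 \<le> n" shows "computes n n (gs1 n) (outs1 n) (Amat n)"
proof -
  have wf: "wf_circuit n (gs1 n) n (outs1 n)" by (rule wf1[OF n])
  have P: "\<And>k. k < n - 1 \<Longrightarrow> kappa n (gs1 n) (n+k) = (\<lambda>j. j \<le> Suc k)"
    using pvals[OF wf] len1[OF n] nth1a by simp
  have k: "n - 1 < length (gs1 n)" using len1[OF n] n by simp
  have e: "n + n - 2 = n + (n - 2)" using n by simp
  have "kappa n (gs1 n) (n + (n - 1)) = (\<lambda>j. kappa n (gs1 n) (n + (n - 2)) j \<noteq> kappa n (gs1 n) 0 j)"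
    using kappa_gate[OF wf k] nth1b[OF n] e by simp
  also have "\<dots> = (\<lambda>j. 1 \<le> j \<and> j < n)"
  proof -
    have P2: "kappa n (gs1 n) (n + (n-2)) = (\<lambda>j. j \<le> Suc (n-2))" using P[of "n-2"] n by simp
    have n0: "0 < n" using n by simp
    show ?thesis unfolding P2 kappa_input[OF n0] using n by (intro ext) auto
  qed
  finally have L: "kappa n (gs1 n) (n + (n - 1)) = (\<lambda>j. 1 \<le> j \<and> j < n)" .
  show ?thesis unfolding computes_def
  proof (intro conjI wf allI impI)
    fix i j assume i: "i < n"
    show "kappa n (gs1 n) (outs1 n i) j = (j < n \<and> Amat n i j)"
    proof (cases "i < n - 1")
      case True
      have "outs1 n i = n + i" using True by (simp add: outs1_def)
      then show ?thesis using P[OF True] True by (simp add: Amat_def) linarith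
    next
      case False then have ii: "i = n - 1" using i by simp
      have "outs1 n i = n + (n - 1)" using ii by (simp add: outs1_def)
      then show ?thesis using L ii n by (simp add: Amat_def conj_commute)
    qed
  qed
qed

lemma cf_intro:
  assumes wf: "wf_circuit n gs m outs"
    and d: "\<And>k j. k < length gs \<Longrightarrow> \<not> (kappa n gs (fst (gs!k)) j \<and> kappa n gs (snd (gs!k)) j)"
  shows "cancellation_free n gs"
  unfolding cancellation_free_def
proof (intro allI impI)
  fix w u assume "(w,u) \<in> (circuit_edges n gs)\<^sup>*"
  then show "kappa n gs w \<le> kappa n gs u"
  proof (induct rule: rtrancl_induct)
    case base then show ?case by simp
  next
    case (step y z)
    obtain k where k: "z = n + k" "k < length gs" "y = fst (gs!k) \<or> y = snd (gs!k)"
      using edge_D[OF step(2)] by blast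
    have "kappa n gs y \<le> kappa n gs z"
      using kappa_gate[OF wf k(2)] d[OF k(2)] k(1,3) by (auto simp: le_fun_def)
    then show ?case using step(3) by (rule order_trans[rotated])
  qed
qed

lemma comp2: assumes n: "3 \<le> n" shows "computes n n (gs2 n) (outs2 n) (Amat n)"
  and "cancellation_free n (gs2 n)"
proof -
  have wf: "wf_circuit n (gs2 n) n (outs2 n)" by (rule wf2[OF n])
  have P: "\<And>k. k < n - 1 \<Longrightarrow> kappa n (gs2 n) (n+k) = (\<lambda>j. j \<le> Suc k)"
    using pvals[OF wf] len2[OF n] nth2a by simp
  have Q: "\<And>t. t < n - 2 \<Longrightarrow> kappa n (gs2 n) (n + (n - 1 + t)) = (\<lambda>j. 1 \<le> j \<and> j \<le> t + 2)"
    using qvals[OF wf n] len2[OF n] nth2b by simp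
  show "computes n n (gs2 n) (outs2 n) (Amat n)" unfolding computes_def
  proof (intro conjI wf allI impI)
    fix i j assume i: "i < n"
    show "kappa n (gs2 n) (outs2 n i) j = (j < n \<and> Amat n i j)"
    proof (cases "i < n - 1")
      case True
      have "outs2 n i = n + i" using True by (simp add: outs2_def)
      then show ?thesis using P[OF True] True by (simp add: Amat_def) linarith
    next
      case False then have i': "i = n - 1" using i by simp
      have e: "n + n - 1 + (n - 3) = n + (n - 1 + (n - 3))" using n by simp
      have lt: "n - 3 < n - 2" using n by simp
      have "outs2 n i = n + (n - 1 + (n - 3))" using i' e by (simp add: outs2_def)
      then show ?thesis using Q[OF lt] i' n by (simp add: Amat_def) linarith
    qed
  qed
  show "cancellation_free n (gs2 n)"
  proof (rule cf_intro[OF wf])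
    fix k j assume k: "k < length (gs2 n)"
    show "\<not> (kappa n (gs2 n) (fst (gs2 n ! k)) j \<and> kappa n (gs2 n) (snd (gs2 n ! k)) j)"
    proof (cases "k < n - 1")
      case True
      show ?thesis
      proof (cases k)
        case 0 then show ?thesis using True by (auto simp: nth2a pf_def kappa_input)
      next
        case (Suc k')
        have "kappa n (gs2 n) (n + k') = (\<lambda>j. j \<le> Suc k')" using P[of k'] True Suc by simp
        then show ?thesis using True Suc by (simp add: nth2a pf_def kappa_input)
      qed
    next
      case False then obtain t where t: "k = n - 1 + t" "t < n - 2" using k len2[OF n]
        by (metis add_less_cancel_left le_add_diff_inverse not_less)
      then have g: "gs2 n ! k = qf n t" using nth2b by simp
      show ?thesis
      proof (cases t)
        case 0 then show ?thesis using n by (simp add: g qf_def kappa_input)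
      next
        case (Suc t')
        have e: "n + n - 1 + t - 1 = n + (n - 1 + t')" using n Suc by simp
        have "kappa n (gs2 n) (n + (n - 1 + t')) = (\<lambda>j. 1 \<le> j \<and> j \<le> t' + 2)" using Q[of t'] t Suc by simp
        moreover have g': "gs2 n ! k = (n + (n - 1 + t'), t' + 3)" using g Suc e by (simp add: qf_def)
        moreover have "t' + 3 < n" using t Suc by simp
        ultimately show ?thesis unfolding g' fst_conv snd_conv by (simp add: kappa_input)
      qed
    qed
  qed
qed



lemma min_le: "2 \<le> n \<Longrightarrow> min_size n n (Amat n) \<le> n"
  unfolding min_size_def using comp1 len1 by (metis (mono_tags, lifting) Least_le)

lemma min_pos: assumes n: "2 \<le> n" shows "0 < min_size n n (Amat n)"
proof -
  have ex: "\<exists>s gs outs. computes n n gs outs (Amat n) \<and> length gs = s" using comp1[OF n] by blast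
  obtain gs outs where c: "computes n n gs outs (Amat n)" and l: "length gs = min_size n n (Amat n)"
    using LeastI_ex[OF ex] unfolding min_size_def by blast
  show ?thesis
  proof (rule ccontr)
    assume "\<not> 0 < min_size n n (Amat n)"
    then have l0: "length gs = 0" using l by simp
    have n0: "0 < n" using n by simp
    have o: "outs 0 < n" using c l0 n0 by (simp add: computes_def wf_circuit_def)
    have v: "\<And>j. kappa n gs (outs 0) j = (j < n \<and> Amat n 0 j)" using c n0 by (simp add: computes_def)
    have "kappa n gs (outs 0) 0" "kappa n gs (outs 0) 1" using v n by (auto simp: Amat_def)
    then show False using kappa_input[OF o] by simp
  qed
qed

lemma cf_ge: assumes n: "3 \<le> n" shows "2 * n - 3 \<le> cf_min_size n n (Amat n)"
proof -
  have ex: "\<exists>s gs outs. computes n n gs outs (Amat n) \<and> cancellation_free n gs \<and> length gs = s"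
    using comp2[OF n] by blast
  obtain gs outs where c: "computes n n gs outs (Amat n)" "cancellation_free n gs"
     and l: "length gs = cf_min_size n n (Amat n)"
    using LeastI_ex[OF ex] unfolding cf_min_size_def by blast
  show ?thesis using lower[OF _ c] n l by simp
qed

lemma fin_mats: "finite {A :: nat \<Rightarrow> nat \<Rightarrow> bool. \<forall>i j. A i j \<longrightarrow> i < n \<and> j < n}"
proof (rule finite_imageD)
  let ?f = "\<lambda>A :: nat \<Rightarrow> nat \<Rightarrow> bool. {(i,j). A i j}"
  show "finite (?f ` {A. \<forall>i j. A i j \<longrightarrow> i < n \<and> j < n})"
    by (rule finite_subset[of _ "Pow ({..<n} \<times> {..<n})"]) auto
  show "inj_on ?f {A. \<forall>i j. A i j \<longrightarrow> i < n \<and> j < n}"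
  proof (rule inj_onI)
    fix A B :: "nat \<Rightarrow> nat \<Rightarrow> bool" assume "?f A = ?f B"
    then have "\<And>i j. A i j = B i j" by (metis (no_types, lifting) case_prodI mem_Collect_eq case_prodD)
    then show "A = B" by (intro ext) auto
  qed
qed

lemma ratio_ge: assumes n: "3 \<le> n"
  shows "2 - 3 / real n \<le> cancellation_ratio n"
proof -
  let ?r = "\<lambda>A. real (cf_min_size n n A) / real (min_size n n A)"
  let ?M = "{A :: nat \<Rightarrow> nat \<Rightarrow> bool. \<forall>i j. A i j \<longrightarrow> i < n \<and> j < n}"
  have eq: "{real (cf_min_size n n A) / real (min_size n n A) | A. \<forall>i j. A i j \<longrightarrow> i < n \<and> j < n} = ?r ` ?M"
    by auto
  have mem: "Amat n \<in> ?M" by (simp add: Amat_def)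
  have "?r (Amat n) \<le> cancellation_ratio n"
    unfolding cancellation_ratio_def eq using fin_mats mem by (intro Max_ge) auto
  moreover have "2 - 3 / real n \<le> ?r (Amat n)"
  proof -
    have c: "real (2 * n - 3) \<le> real (cf_min_size n n (Amat n))" using cf_ge[OF n] by simp
    have m: "0 < real (min_size n n (Amat n))" "real (min_size n n (Amat n)) \<le> real n"
      using min_pos min_le n by auto
    have e: "real (2 * n - 3) = 2 * real n - 3" using n by (simp add: of_nat_diff)
    have "2 - 3 / real n = real (2 * n - 3) / real n" using n e by (simp add: field_simps)
    also have "\<dots> \<le> real (2 * n - 3) / real (min_size n n (Amat n))"
      using m by (intro divide_left_mono) auto
    also have "\<dots> \<le> ?r (Amat n)" using c m by (intro divide_right_mono) auto
    finally show ?thesis .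
  qed
  ultimately show ?thesis by linarith
qed

theorem theorem2:
  shows "\<exists>(S :: nat set) (A :: nat \<Rightarrow> nat \<Rightarrow> nat \<Rightarrow> bool) (\<epsilon> :: nat \<Rightarrow> real).
           infinite S \<and> \<epsilon> \<longlonglongrightarrow> 0 \<and>
           (\<forall>n \<in> S. min_size n n (A n) > 0 \<and>
              (\<forall>gs outs. computes n n gs outs (A n) \<and> cancellation_free n gs \<longrightarrow>
                 real (length gs) \<ge> (2 - \<epsilon> n) * real (min_size n n (A n))))
         \<and> (\<exists>\<delta> :: nat \<Rightarrow> real. \<delta> \<longlonglongrightarrow> 0 \<and> (\<forall>n. cancellation_ratio n \<ge> 2 - \<delta> n))"
proof -
  have lim: "(\<lambda>n. 3 / real n) \<longlonglongrightarrow> 0"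
    using tendsto_mult_right_zero[OF lim_inverse_n', of 3] by simp
  have P1: "\<forall>n \<in> {3..}. min_size n n (Amat n) > 0 \<and>
              (\<forall>gs outs. computes n n gs outs (Amat n) \<and> cancellation_free n gs \<longrightarrow>
                 real (length gs) \<ge> (2 - 3 / real n) * real (min_size n n (Amat n)))"
  proof (intro ballI conjI allI impI)
    fix n :: nat assume "n \<in> {3..}" then have n: "3 \<le> n" by simp
    show "min_size n n (Amat n) > 0" using min_pos n by simp
    fix gs outs assume c: "computes n n gs outs (Amat n) \<and> cancellation_free n gs"
    have L: "real (2 * n - 3) \<le> real (length gs)" using lower[of n gs outs] c n by simp
    have e: "real (2 * n - 3) = 2 * real n - 3" using n by (simp add: of_nat_diff)
    have pos: "0 \<le> 2 - 3 / real n" using n by (simp add: field_simps)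
    have "(2 - 3 / real n) * real (min_size n n (Amat n)) \<le> (2 - 3 / real n) * real n"
      using min_le[of n] n pos by (intro mult_left_mono) auto
    also have "\<dots> = 2 * real n - 3" using n by (simp add: field_simps)
    finally show "real (length gs) \<ge> (2 - 3 / real n) * real (min_size n n (Amat n))" using L e by linarith
  qed
  define \<delta> where "\<delta> = (\<lambda>n. if n < 3 then 2 - cancellation_ratio n else 3 / real n)"
  have dl: "\<delta> \<longlonglongrightarrow> 0"
    by (rule Lim_transform_eventually[OF lim]) (auto simp: \<delta>_def eventually_sequentially intro: exI[of _ 3])
  have dr: "\<forall>n. cancellation_ratio n \<ge> 2 - \<delta> n"
    using ratio_ge by (auto simp: \<delta>_def)
  show ?thesis using infinite_Ici[of "3::nat"] lim P1 dl dr by blast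
qed


end
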